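(* Let a logic be given by a sentential language with a constant expressive semantics over a finite set $V$ of truth values, whose consequence relation is induced by an intersective mixed consequence truth-relation $\models$, and suppose the logic has a G-conditional. Then for every classical connective $C$ (a truth function $\{0,1\}^n\to\{0,1\}$), there is a truth function $\underline{C^+}:V^n\to V$ such that a connective $C^+$ interpreted by it is regular for the logic with a regularity rule $(\mathcal{B}^p,\mathcal{B}^c)$ that is also satisfied by $C$ in classical logic.
   Context: Truth values: finite $V$ containing distinct $1,0$. A set of designated values is $\mathcal{D}\subseteq V$ with $1\in\mathcal{D}$, $0\notin\mathcal{D}$; the mixed truth-relation $\models_{\mathcal{D}_p,\mathcal{D}_c}$ holds between $\gamma,\delta\subseteq V$ iff ($\gamma\subseteq\mathcal{D}_p\Rightarrow\delta\cap\mathcal{D}_c\neq\emptyset$); an intersective mixed truth-relation is a finite intersection of such. A sentential language has denumerably many atoms and connectives; a semantics is a set of valuations mapping atoms to $V$, interpreting each $n$-ary connective by a fixed truth function $V^n\to V$ (same for all valuations), extended compositionally, and such that every assignment of values to finitely many distinct atoms is realized by some valuation. The induced consequence relation on sets of formulas: $\Gamma\vdash\Delta$ iff $v(\Gamma)\models v(\Delta)$ for every valuation $v$. Constant expressive: for every $\alpha\in V$ some formula has value $\alpha$ under every valuation. Write $\Gamma,A$ for $\Gamma\cup\{A\}$. An $n$-ary connective $C$ is regular with regularity rule $(\mathcal{B}^p,\mathcal{B}^c)$, $\mathcal{B}^p,\mathcal{B}^c\subseteq\mathcal{P}(\{1..n\})^2$, if for all $\Gamma,\Delta,F_1,\dots,F_n$: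 $\Gamma,C(F_1,\dots,F_n)\vdash\Delta$ iff for all $(B_p,B_c)\in\mathcal{B}^p$, $\Gamma\cup\{F_i:i\in B_p\}\vdash\{F_i:i\in B_c\}\cup\Delta$; and $\Gamma\vdash C(F_1,\dots,F_n),\Delta$ iff the same holds for all $(B_p,B_c)\in\mathcal{B}^c$. A G-conditional $\to$ is a binary connective with: $\Gamma\vdash A\to B,\Delta$ iff $\Gamma,A\vdash B,\Delta$; and $\Gamma,A\to B\vdash\Delta$ iff ($\Gamma\vdash A,\Delta$ and $\Gamma,B\vdash\Delta$). Classical logic: $V=\{0,1\}$ with the truth-relation $\models_{\{1\},\{1\}}$. *)

theory Defs
  imports Main "HOL-Library.Countable_Set"
begin

datatype 'c form = Atom nat | Op 'c "'c form list"

fun wf :: "('c \<Rightarrow> nat) \<Rightarrow> 'c form \<Rightarrow> bool" where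
  "wf ar (Atom k) = True"
| "wf ar (Op c fs) = (length fs = ar c \<and> (\<forall>f\<in>set fs. wf ar f))"

fun eval :: "('c \<Rightarrow> 'v list \<Rightarrow> 'v) \<Rightarrow> (nat \<Rightarrow> 'v) \<Rightarrow> 'c form \<Rightarrow> 'v" where
  "eval I w (Atom k) = w k"
| "eval I w (Op c fs) = I c (map (eval I w) fs)"

definition designated :: "'v \<Rightarrow> 'v \<Rightarrow> 'v set \<Rightarrow> bool" where
  "designated one zero D \<longleftrightarrow> one \<in> D \<and> zero \<notin> D"

definition mixed :: "'v set \<Rightarrow> 'v set \<Rightarrow> 'v set \<Rightarrow> 'v set \<Rightarrow> bool" where
  "mixed Dp Dc \<gamma> \<delta> \<longleftrightarrow> (\<gamma> \<subseteq> Dp \<longrightarrow> \<delta> \<inter> Dc \<noteq> {})"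

definition intersective :: "'v \<Rightarrow> 'v \<Rightarrow> ('v set \<Rightarrow> 'v set \<Rightarrow> bool) \<Rightarrow> bool" where
  "intersective one zero R \<longleftrightarrow>
     (\<exists>S. finite S \<and> S \<noteq> {} \<and>
          (\<forall>(Dp, Dc)\<in>S. designated one zero Dp \<and> designated one zero Dc) \<and>
          R = (\<lambda>\<gamma> \<delta>. \<forall>(Dp, Dc)\<in>S. mixed Dp Dc \<gamma> \<delta>))"

definition semantics :: "(nat \<Rightarrow> 'v) set \<Rightarrow> bool" where
  "semantics W \<longleftrightarrow> (\<forall>A f. finite A \<longrightarrow> (\<exists>w\<in>W. \<forall>k\<in>A. w k = f k))"

definition conseq ::
  "('c \<Rightarrow> 'v list \<Rightarrow> 'v) \<Rightarrow> (nat \<Rightarrow> 'v) set \<Rightarrow> ('v set \<Rightarrow> 'v set \<Rightarrow> bool)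
   \<Rightarrow> 'c form set \<Rightarrow> 'c form set \<Rightarrow> bool" where
  "conseq I W R \<Gamma> \<Delta> \<longleftrightarrow> (\<forall>w\<in>W. R (eval I w ` \<Gamma>) (eval I w ` \<Delta>))"

definition constant_expressive ::
  "('c \<Rightarrow> nat) \<Rightarrow> ('c \<Rightarrow> 'v list \<Rightarrow> 'v) \<Rightarrow> (nat \<Rightarrow> 'v) set \<Rightarrow> bool" where
  "constant_expressive ar I W \<longleftrightarrow>
     (\<forall>\<alpha>. \<exists>F. wf ar F \<and> (\<forall>w\<in>W. eval I w F = \<alpha>))"

definition G_conditional ::
  "('c \<Rightarrow> nat) \<Rightarrow> ('c \<Rightarrow> 'v list \<Rightarrow> 'v) \<Rightarrow> (nat \<Rightarrow> 'v) set \<Rightarrow> ('v set \<Rightarrow> 'v set \<Rightarrow> bool)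
   \<Rightarrow> 'c \<Rightarrow> bool" where
  "G_conditional ar I W R imp \<longleftrightarrow> ar imp = 2 \<and>
     (\<forall>\<Gamma> \<Delta> A B. (\<forall>F\<in>\<Gamma> \<union> \<Delta>. wf ar F) \<longrightarrow> wf ar A \<longrightarrow> wf ar B \<longrightarrow>
        (conseq I W R \<Gamma> (insert (Op imp [A, B]) \<Delta>) \<longleftrightarrow> conseq I W R (insert A \<Gamma>) (insert B \<Delta>)) \<and>
        (conseq I W R (insert (Op imp [A, B]) \<Gamma>) \<Delta> \<longleftrightarrow>
           conseq I W R \<Gamma> (insert A \<Delta>) \<and> conseq I W R (insert B \<Gamma>) \<Delta>))"

(* regularity of connective c with rule (Bp, Bc); argument positions are 0-based *)
definition regular ::
  "('c \<Rightarrow> nat) \<Rightarrow> ('c \<Rightarrow> 'v list \<Rightarrow> 'v) \<Rightarrow> (nat \<Rightarrow> 'v) set \<Rightarrow> ('v set \<Rightarrow> 'v set \<Rightarrow> bool)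
   \<Rightarrow> 'c \<Rightarrow> (nat set \<times> nat set) set \<Rightarrow> (nat set \<times> nat set) set \<Rightarrow> bool" where
  "regular ar I W R c Bp Bc \<longleftrightarrow>
     (\<forall>\<Gamma> \<Delta> Fs. (\<forall>F\<in>\<Gamma> \<union> \<Delta>. wf ar F) \<longrightarrow> length Fs = ar c \<longrightarrow> (\<forall>F\<in>set Fs. wf ar F) \<longrightarrow>
        (conseq I W R (insert (Op c Fs) \<Gamma>) \<Delta> \<longleftrightarrow>
           (\<forall>(P, Q)\<in>Bp. conseq I W R (\<Gamma> \<union> (\<lambda>i. Fs ! i) ` P) ((\<lambda>i. Fs ! i) ` Q \<union> \<Delta>))) \<and>
        (conseq I W R \<Gamma> (insert (Op c Fs) \<Delta>) \<longleftrightarrow>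
           (\<forall>(P, Q)\<in>Bc. conseq I W R (\<Gamma> \<union> (\<lambda>i. Fs ! i) ` P) ((\<lambda>i. Fs ! i) ` Q \<union> \<Delta>))))"

definition rule_of_arity :: "nat \<Rightarrow> (nat set \<times> nat set) set \<Rightarrow> bool" where
  "rule_of_arity n B \<longleftrightarrow> (\<forall>(P, Q)\<in>B. P \<subseteq> {..<n} \<and> Q \<subseteq> {..<n})"

(* extension of a language by one new connective None of arity n with truth function g *)
definition ext_ar :: "('c \<Rightarrow> nat) \<Rightarrow> nat \<Rightarrow> 'c option \<Rightarrow> nat" where
  "ext_ar ar n x = (case x of None \<Rightarrow> n | Some c \<Rightarrow> ar c)"

definition ext_I :: "('c \<Rightarrow> 'v list \<Rightarrow> 'v) \<Rightarrow> ('v list \<Rightarrow> 'v) \<Rightarrow> 'c option \<Rightarrow> 'v list \<Rightarrow> 'v" where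
  "ext_I I g x = (case x of None \<Rightarrow> g | Some c \<Rightarrow> I c)"

(* classical truth-relation: V = {False, True} (0 = False, 1 = True), designated {1}, {1} *)
definition classical_rel :: "bool set \<Rightarrow> bool set \<Rightarrow> bool" where
  "classical_rel = mixed {True} {True}"

end

theory Submission
  imports Defs
begin

datatype tm = TV nat | TBot | TImp tm tm

fun teval :: "('a \<Rightarrow> 'a \<Rightarrow> 'a) \<Rightarrow> 'a \<Rightarrow> tm \<Rightarrow> 'a list \<Rightarrow> 'a" where
  "teval im b (TV i) xs = xs ! i"
| "teval im b TBot xs = b"
| "teval im b (TImp s u) xs = im (teval im b s xs) (teval im b u xs)"

fun vars :: "tm \<Rightarrow> nat set" where
  "vars (TV i) = {i}" | "vars TBot = {}" | "vars (TImp s u) = vars s \<union> vars u"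

fun Lr :: "tm \<Rightarrow> (nat set \<times> nat set) set" and Rr :: "tm \<Rightarrow> (nat set \<times> nat set) set" where
  "Lr (TV i) = {({i},{})}"
| "Lr TBot = {}"
| "Lr (TImp s u) = Rr s \<union> Lr u"
| "Rr (TV i) = {({},{i})}"
| "Rr TBot = {({},{})}"
| "Rr (TImp s u) = {(P \<union> P', Q \<union> Q') | P Q P' Q'. (P,Q) \<in> Lr s \<and> (P',Q') \<in> Rr u}"

lemma LR_vars0: "(\<forall>P Q. (P,Q)\<in>Lr t \<longrightarrow> P \<subseteq> vars t \<and> Q \<subseteq> vars t) \<and> (\<forall>P Q. (P,Q)\<in>Rr t \<longrightarrow> P \<subseteq> vars t \<and> Q \<subseteq> vars t)"
  apply (induction t)
    apply simp
   apply simp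
  apply (simp only: Lr.simps Rr.simps vars.simps)
  apply blast
  done

lemma LR_vars: "(P,Q)\<in>Lr t \<Longrightarrow> P \<subseteq> vars t \<and> Q \<subseteq> vars t" "(P,Q)\<in>Rr t \<Longrightarrow> P \<subseteq> vars t \<and> Q \<subseteq> vars t"
  using LR_vars0[of t] by blast+

lemma ballpD: "\<forall>(P,Q)\<in>X. A P Q \<Longrightarrow> (P,Q)\<in>X \<Longrightarrow> A P Q" by auto

lemma teval_wf:
  assumes "\<And>a b. wfq a \<Longrightarrow> wfq b \<Longrightarrow> wfq (im a b)" "wfq bt"
  shows "vars t \<subseteq> {..<length Fs} \<Longrightarrow> \<forall>F\<in>set Fs. wfq F \<Longrightarrow> wfq (teval im bt t Fs)"
  by (induction t) (auto simp: assms)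

lemma abstract_reg:
  fixes seq :: "'f set \<Rightarrow> 'f set \<Rightarrow> bool"
  assumes wi: "\<And>a b. wfq a \<Longrightarrow> wfq b \<Longrightarrow> wfq (im a b)" and wb: "wfq bt"
  and GR: "\<And>\<Gamma> \<Delta> A B. \<forall>F\<in>\<Gamma> \<union> \<Delta>. wfq F \<Longrightarrow> wfq A \<Longrightarrow> wfq B \<Longrightarrow>
        seq \<Gamma> (insert (im A B) \<Delta>) = seq (insert A \<Gamma>) (insert B \<Delta>)"
  and GL: "\<And>\<Gamma> \<Delta> A B. \<forall>F\<in>\<Gamma> \<union> \<Delta>. wfq F \<Longrightarrow> wfq A \<Longrightarrow> wfq B \<Longrightarrow>
        seq (insert (im A B) \<Gamma>) \<Delta> = (seq \<Gamma> (insert A \<Delta>) \<and> seq (insert B \<Gamma>) \<Delta>)"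
  and BL: "\<And>\<Gamma> \<Delta>. \<forall>F\<in>\<Gamma> \<union> \<Delta>. wfq F \<Longrightarrow> seq (insert bt \<Gamma>) \<Delta>"
  and BR: "\<And>\<Gamma> \<Delta>. \<forall>F\<in>\<Gamma> \<union> \<Delta>. wfq F \<Longrightarrow> seq \<Gamma> (insert bt \<Delta>) = seq \<Gamma> \<Delta>"
  and Fs: "\<forall>F\<in>set Fs. wfq F"
  shows "vars t \<subseteq> {..<length Fs} \<Longrightarrow> \<forall>F\<in>\<Gamma> \<union> \<Delta>. wfq F \<Longrightarrow>
   (seq (insert (teval im bt t Fs) \<Gamma>) \<Delta> = (\<forall>(P,Q)\<in>Lr t. seq (\<Gamma> \<union> (\<lambda>i. Fs!i)`P) ((\<lambda>i. Fs!i)`Q \<union> \<Delta>))) \<and>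
   (seq \<Gamma> (insert (teval im bt t Fs) \<Delta>) = (\<forall>(P,Q)\<in>Rr t. seq (\<Gamma> \<union> (\<lambda>i. Fs!i)`P) ((\<lambda>i. Fs!i)`Q \<union> \<Delta>)))"
proof (induction t arbitrary: \<Gamma> \<Delta>)
  case (TV i)
  then show ?case by simp
next
  case TBot
  then show ?case using BL BR by simp
next
  case (TImp s u)
  let ?F = "\<lambda>i. Fs ! i"
  let ?es = "teval im bt s Fs"
  let ?eu = "teval im bt u Fs"
  have vs: "vars s \<subseteq> {..<length Fs}" and vu: "vars u \<subseteq> {..<length Fs}" using TImp.prems by auto
  have wfF: "\<And>P. P \<subseteq> {..<length Fs} \<Longrightarrow> \<forall>F\<in>?F ` P. wfq F" using Fs by auto
  have ws: "wfq ?es" using teval_wf[of wfq im bt, OF wi wb vs Fs] by blast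
  have wu: "wfq ?eu" using teval_wf[of wfq im bt, OF wi wb vu Fs] by blast
  have wG: "\<forall>F\<in>\<Gamma> \<union> \<Delta>. wfq F" using TImp.prems by auto
  have Ls: "\<And>P Q. (P,Q) \<in> Lr s \<Longrightarrow> P \<subseteq> {..<length Fs} \<and> Q \<subseteq> {..<length Fs}"
    using LR_vars(1)[of _ _ s] vs by blast
  have left: "seq (insert (teval im bt (TImp s u) Fs) \<Gamma>) \<Delta> =
     (\<forall>(P,Q)\<in>Lr (TImp s u). seq (\<Gamma> \<union> ?F`P) (?F`Q \<union> \<Delta>))"
  proof -
    have "seq (insert (teval im bt (TImp s u) Fs) \<Gamma>) \<Delta> = (seq \<Gamma> (insert ?es \<Delta>) \<and> seq (insert ?eu \<Gamma>) \<Delta>)"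
      using GL[OF wG ws wu] by simp
    also have "\<dots> = ((\<forall>(P,Q)\<in>Rr s. seq (\<Gamma> \<union> ?F`P) (?F`Q \<union> \<Delta>)) \<and> (\<forall>(P,Q)\<in>Lr u. seq (\<Gamma> \<union> ?F`P) (?F`Q \<union> \<Delta>)))"
      using TImp.IH(1)[OF vs wG] TImp.IH(2)[OF vu wG] by simp
    finally show ?thesis by auto
  qed
  have right: "seq \<Gamma> (insert (teval im bt (TImp s u) Fs) \<Delta>) =
     (\<forall>(P,Q)\<in>Rr (TImp s u). seq (\<Gamma> \<union> ?F`P) (?F`Q \<union> \<Delta>))"
  proof -
    have "seq \<Gamma> (insert (teval im bt (TImp s u) Fs) \<Delta>) = seq (insert ?es \<Gamma>) (insert ?eu \<Delta>)"
      using GR[OF wG ws wu] by simp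
    also have "\<dots> = (\<forall>(P,Q)\<in>Lr s. seq (\<Gamma> \<union> ?F`P) (?F`Q \<union> insert ?eu \<Delta>))"
      using TImp.IH(1)[OF vs, of \<Gamma> "insert ?eu \<Delta>"] wG wu by simp
    also have "\<dots> = (\<forall>(P,Q)\<in>Lr s. \<forall>(P',Q')\<in>Rr u. seq (\<Gamma> \<union> ?F`P \<union> ?F`P') (?F`Q' \<union> (?F`Q \<union> \<Delta>)))"
    proof (rule ball_cong[OF refl])
      fix x assume x: "x \<in> Lr s"
      obtain P Q where xe: "x = (P,Q)" by force
      have PQ: "P \<subseteq> {..<length Fs}" "Q \<subseteq> {..<length Fs}" using Ls[of P Q] x xe by auto
      have wPQ: "\<forall>F\<in>(\<Gamma> \<union> ?F`P) \<union> (?F`Q \<union> \<Delta>). wfq F" using wG wfF[OF PQ(1)] wfF[OF PQ(2)] by blast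
      have "seq (\<Gamma> \<union> ?F`P) (insert ?eu (?F`Q \<union> \<Delta>)) = (\<forall>(P',Q')\<in>Rr u. seq (\<Gamma> \<union> ?F`P \<union> ?F`P') (?F`Q' \<union> (?F`Q \<union> \<Delta>)))"
        by (rule conjunct2[OF TImp.IH(2)[OF vu wPQ]])
      then show "(case x of (P,Q) \<Rightarrow> seq (\<Gamma> \<union> ?F`P) (?F`Q \<union> insert ?eu \<Delta>)) =
          (case x of (P,Q) \<Rightarrow> \<forall>(P',Q')\<in>Rr u. seq (\<Gamma> \<union> ?F`P \<union> ?F`P') (?F`Q' \<union> (?F`Q \<union> \<Delta>)))"
        by (simp add: xe)
    qed
    also have "\<dots> = (\<forall>(P,Q)\<in>Rr (TImp s u). seq (\<Gamma> \<union> ?F`P) (?F`Q \<union> \<Delta>))"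
    proof
      assume H: "\<forall>(P,Q)\<in>Lr s. \<forall>(P',Q')\<in>Rr u. seq (\<Gamma> \<union> ?F`P \<union> ?F`P') (?F`Q' \<union> (?F`Q \<union> \<Delta>))"
      show "\<forall>(P,Q)\<in>Rr (TImp s u). seq (\<Gamma> \<union> ?F`P) (?F`Q \<union> \<Delta>)"
      proof (rule ballI)
        fix x assume "x \<in> Rr (TImp s u)"
        then obtain P Q P' Q' where x: "x = (P \<union> P', Q \<union> Q')" and a: "(P,Q) \<in> Lr s" "(P',Q') \<in> Rr u"
          by auto
        have e1: "\<Gamma> \<union> ?F`(P \<union> P') = \<Gamma> \<union> ?F`P \<union> ?F`P'" by blast
        have e2: "?F`(Q \<union> Q') \<union> \<Delta> = ?F`Q' \<union> (?F`Q \<union> \<Delta>)" by blast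
        have "seq (\<Gamma> \<union> ?F`P \<union> ?F`P') (?F`Q' \<union> (?F`Q \<union> \<Delta>))"
          by (rule ballpD[OF ballpD[OF H a(1)] a(2)])
        then show "case x of (P,Q) \<Rightarrow> seq (\<Gamma> \<union> ?F`P) (?F`Q \<union> \<Delta>)"
          unfolding x prod.case e1 e2 .
      qed
    next
      assume H: "\<forall>(P,Q)\<in>Rr (TImp s u). seq (\<Gamma> \<union> ?F`P) (?F`Q \<union> \<Delta>)"
      show "\<forall>(P,Q)\<in>Lr s. \<forall>(P',Q')\<in>Rr u. seq (\<Gamma> \<union> ?F`P \<union> ?F`P') (?F`Q' \<union> (?F`Q \<union> \<Delta>))"
      proof (rule ballI)
        fix x assume x: "x \<in> Lr s"
        obtain P Q where xe: "x = (P,Q)" by force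
        have "\<forall>(P',Q')\<in>Rr u. seq (\<Gamma> \<union> ?F`P \<union> ?F`P') (?F`Q' \<union> (?F`Q \<union> \<Delta>))"
        proof (rule ballI)
          fix y assume y: "y \<in> Rr u"
          obtain P' Q' where ye: "y = (P',Q')" by force
          have e1: "\<Gamma> \<union> ?F`(P \<union> P') = \<Gamma> \<union> ?F`P \<union> ?F`P'" by blast
          have e2: "?F`(Q \<union> Q') \<union> \<Delta> = ?F`Q' \<union> (?F`Q \<union> \<Delta>)" by blast
          have m: "(P \<union> P', Q \<union> Q') \<in> Rr (TImp s u)" using x y xe ye by auto
          have "seq (\<Gamma> \<union> ?F`(P \<union> P')) (?F`(Q \<union> Q') \<union> \<Delta>)" by (rule ballpD[OF H m])
          then show "case y of (P',Q') \<Rightarrow> seq (\<Gamma> \<union> ?F`P \<union> ?F`P') (?F`Q' \<union> (?F`Q \<union> \<Delta>))"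
            unfolding ye prod.case e1 e2 .
        qed
        then show "case x of (P,Q) \<Rightarrow> \<forall>(P',Q')\<in>Rr u. seq (\<Gamma> \<union> ?F`P \<union> ?F`P') (?F`Q' \<union> (?F`Q \<union> \<Delta>))"
          unfolding xe prod.case .
      qed
    qed
    finally show ?thesis .
  qed
  show ?case using left right by blast
qed



definition tNot where "tNot a = TImp a TBot"
definition tOr where "tOr a b = TImp (tNot a) b"
definition tAnd where "tAnd a b = tNot (TImp a (tNot b))"
definition tTop where "tTop = TImp TBot TBot"
definition lit where "lit i b = (if b then TV i else tNot (TV i))"
definition eqt where "eqt xs = foldr tAnd (map (\<lambda>i. lit i (xs!i)) [0..<length xs]) tTop"
definition dnf where "dnf L = foldr (\<lambda>xs acc. tOr (eqt xs) acc) L TBot"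

abbreviation bev where "bev t ys \<equiv> teval (\<longrightarrow>) False t ys"

lemma bev_foldr_and: "bev (foldr tAnd ts tTop) ys = (\<forall>t\<in>set ts. bev t ys)"
  by (induction ts) (auto simp: tAnd_def tNot_def tTop_def)

lemma vars_foldr_and: "vars (foldr tAnd ts tTop) = (\<Union>t\<in>set ts. vars t)"
  by (induction ts) (auto simp: tAnd_def tNot_def tTop_def)

lemma bev_eqt: "length ys = length xs \<Longrightarrow> bev (eqt xs) ys = (ys = xs)"
proof -
  assume l: "length ys = length xs"
  have "bev (eqt xs) ys = (\<forall>i<length xs. bev (lit i (xs!i)) ys)"
    unfolding eqt_def bev_foldr_and by auto
  also have "\<dots> = (\<forall>i<length xs. ys!i = xs!i)" by (auto simp: lit_def tNot_def)
  also have "\<dots> = (ys = xs)" using l by (auto intro: nth_equalityI)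
  finally show ?thesis .
qed

lemma vars_eqt: "vars (eqt xs) \<subseteq> {..<length xs}"
  unfolding eqt_def vars_foldr_and by (auto simp: lit_def tNot_def)

lemma bev_dnf: "bev (dnf L) ys = (\<exists>xs\<in>set L. bev (eqt xs) ys)"
  by (induction L) (auto simp: dnf_def tOr_def tNot_def)

lemma vars_dnf: "\<forall>xs\<in>set L. length xs = n \<Longrightarrow> vars (dnf L) \<subseteq> {..<n}"
  apply (induction L) apply (simp add: dnf_def)
  using vars_eqt by (fastforce simp: dnf_def tOr_def tNot_def)

lemma term_exists: "\<exists>t. vars t \<subseteq> {..<n} \<and> (\<forall>ys. length ys = n \<longrightarrow> bev t ys = C ys)"
proof -
  let ?L = "filter C (List.n_lists n [True, False])"
  have "\<forall>xs\<in>set ?L. length xs = n" by (simp add: set_n_lists)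
  moreover have "\<forall>ys. length ys = n \<longrightarrow> bev (dnf ?L) ys = C ys"
  proof (intro allI impI)
    fix ys :: "bool list" assume l: "length ys = n"
    have "bev (dnf ?L) ys = (\<exists>xs\<in>set ?L. ys = xs)"
      unfolding bev_dnf using bev_eqt l by (auto simp: set_n_lists)
    also have "\<dots> = C ys" using l by (auto simp: set_n_lists)
    finally show "bev (dnf ?L) ys = C ys" .
  qed
  ultimately show ?thesis using vars_dnf by blast
qed



fun tr :: "tm \<Rightarrow> 'c \<Rightarrow> 'c form \<Rightarrow> 'c option form \<Rightarrow> 'c form" where
  "tr t i z (Atom k) = Atom k"
| "tr t i z (Op None fs) = teval (\<lambda>A B. Op i [A, B]) z t (map (tr t i z) fs)"
| "tr t i z (Op (Some c) fs) = Op c (map (tr t i z) fs)"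

lemma ext_ar_simps[simp]: "ext_ar ar n None = n" "ext_ar ar n (Some c) = ar c"
  by (simp_all add: ext_ar_def)

lemma ext_I_simps[simp]: "ext_I I g None = g" "ext_I I g (Some c) = I c"
  by (simp_all add: ext_I_def)

lemma teval_eval:
  assumes "\<forall>w\<in>W. eval I w z = zero" "w \<in> W"
  shows "vars t \<subseteq> {..<length Fs} \<Longrightarrow>
    eval I w (teval (\<lambda>A B. Op i [A, B]) z t Fs) = teval (\<lambda>x y. I i [x, y]) zero t (map (eval I w) Fs)"
  using assms by (induction t) auto

lemma tr_props:
  assumes ai: "ar i = 2" and wz: "wf ar z" and ez: "\<forall>w\<in>W. eval I w z = zero"
    and vt: "vars t \<subseteq> {..<n}"
  shows "wf (ext_ar ar n) X \<Longrightarrow> wf ar (tr t i z X) \<and>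
     (\<forall>w\<in>W. eval I w (tr t i z X) = eval (ext_I I (teval (\<lambda>x y. I i [x, y]) zero t)) w X)"
proof (induction X)
  case (Atom k)
  then show ?case by simp
next
  case (Op c fs)
  show ?case
  proof (cases c)
    case None
    have l: "length fs = n" and wfs: "\<forall>f\<in>set fs. wf (ext_ar ar n) f"
      using Op.prems None by simp_all
    have IH: "\<And>f. f \<in> set fs \<Longrightarrow> wf ar (tr t i z f) \<and>
      (\<forall>w\<in>W. eval I w (tr t i z f) = eval (ext_I I (teval (\<lambda>x y. I i [x, y]) zero t)) w f)"
      using Op.IH wfs by blast
    have w1: "wf ar (tr t i z (Op c fs))"
      unfolding None tr.simps
      by (rule teval_wf[where wfq="wf ar"]) (use ai wz vt l IH in auto)
    have "\<forall>w\<in>W. eval I w (tr t i z (Op c fs)) = eval (ext_I I (teval (\<lambda>x y. I i [x, y]) zero t)) w (Op c fs)"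
    proof
      fix w assume w: "w \<in> W"
      have "eval I w (tr t i z (Op c fs)) = teval (\<lambda>x y. I i [x, y]) zero t (map (eval I w) (map (tr t i z) fs))"
        unfolding None tr.simps by (rule teval_eval[OF ez w]) (use vt l in auto)
      also have "map (eval I w) (map (tr t i z) fs) = map (eval (ext_I I (teval (\<lambda>x y. I i [x, y]) zero t)) w) fs"
        using IH w by auto
      finally show "eval I w (tr t i z (Op c fs)) = eval (ext_I I (teval (\<lambda>x y. I i [x, y]) zero t)) w (Op c fs)"
        by (simp add: None)
    qed
    then show ?thesis using w1 by blast
  next
    case (Some d)
    have l: "length fs = ar d" and wfs: "\<forall>f\<in>set fs. wf (ext_ar ar n) f"
      using Op.prems Some by simp_all
    have IH: "\<And>f. f \<in> set fs \<Longrightarrow> wf ar (tr t i z f) \<and>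
      (\<forall>w\<in>W. eval I w (tr t i z f) = eval (ext_I I (teval (\<lambda>x y. I i [x, y]) zero t)) w f)"
      using Op.IH wfs by blast
    let ?E = "eval (ext_I I (teval (\<lambda>x y. I i [x, y]) zero t))"
    show ?thesis
    proof
      show "wf ar (tr t i z (Op c fs))" using l IH by (simp add: Some)
      show "\<forall>w\<in>W. eval I w (tr t i z (Op c fs)) = ?E w (Op c fs)"
      proof
        fix w assume w: "w \<in> W"
        have "map (eval I w) (map (tr t i z) fs) = map (?E w) fs"
          unfolding map_map
        proof (rule map_cong[OF refl])
          fix f assume "f \<in> set fs"
          then show "(eval I w \<circ> tr t i z) f = ?E w f"
            using IH w by simp
        qed
        then show "eval I w (tr t i z (Op c fs)) = ?E w (Op c fs)"
          by (simp only: Some tr.simps eval.simps ext_I_simps)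
      qed
    qed
  qed
qed

lemma conseq_tr:
  assumes ai: "ar i = 2" and wz: "wf ar z" and ez: "\<forall>w\<in>W. eval I w z = zero"
    and vt: "vars t \<subseteq> {..<n}"
    and wG: "\<forall>F\<in>\<Gamma> \<union> \<Delta>. wf (ext_ar ar n) F"
  shows "conseq (ext_I I (teval (\<lambda>x y. I i [x, y]) zero t)) W R \<Gamma> \<Delta> =
         conseq I W R (tr t i z ` \<Gamma>) (tr t i z ` \<Delta>)"
proof -
  have e: "\<And>w X. w \<in> W \<Longrightarrow> X \<in> \<Gamma> \<union> \<Delta> \<Longrightarrow> eval I w (tr t i z X) = eval (ext_I I (teval (\<lambda>x y. I i [x, y]) zero t)) w X"
    using tr_props[OF ai wz ez vt] wG by blast
  have "\<And>w. w \<in> W \<Longrightarrow> eval I w ` tr t i z ` \<Gamma> = eval (ext_I I (teval (\<lambda>x y. I i [x, y]) zero t)) w ` \<Gamma>"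
    "\<And>w. w \<in> W \<Longrightarrow> eval I w ` tr t i z ` \<Delta> = eval (ext_I I (teval (\<lambda>x y. I i [x, y]) zero t)) w ` \<Delta>"
    unfolding image_image using e by (auto intro!: image_cong)
  then show ?thesis unfolding conseq_def by auto
qed

lemma img_nth: "P \<subseteq> {..<length Fs} \<Longrightarrow> f ` (\<lambda>i. Fs ! i) ` P = (\<lambda>i. map f Fs ! i) ` P"
  unfolding image_image by (auto intro!: image_cong)



lemma teval_sem:
  "vars t \<subseteq> {..<length Fs} \<Longrightarrow>
   teval (\<lambda>a b w. a w \<longrightarrow> b w) (\<lambda>w. False) t Fs w = bev t (map (\<lambda>\<phi>. \<phi> w) Fs)"
  by (induction t) auto

lemma ball_pair_cong: "(\<And>P Q. (P,Q)\<in>X \<Longrightarrow> A P Q = B P Q) \<Longrightarrow> (\<forall>(P,Q)\<in>X. A P Q) = (\<forall>(P,Q)\<in>X. B P Q)"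
  by fastforce

theorem theorem3p19:
  fixes one zero :: "'v::finite"
    and ar :: "'c \<Rightarrow> nat"
    and I :: "'c \<Rightarrow> 'v list \<Rightarrow> 'v"
    and W :: "(nat \<Rightarrow> 'v) set"
    and R :: "'v set \<Rightarrow> 'v set \<Rightarrow> bool"
    and n :: nat
    and C :: "bool list \<Rightarrow> bool"
  assumes "one \<noteq> zero"
    and "countable (UNIV :: 'c set)" and "infinite (UNIV :: 'c set)"
    and "semantics W"
    and "intersective one zero R"
    and "constant_expressive ar I W"
    and "\<exists>imp. G_conditional ar I W R imp"
  shows "\<exists>(g :: 'v list \<Rightarrow> 'v) Bp Bc.
           rule_of_arity n Bp \<and> rule_of_arity n Bc \<and>
           regular (ext_ar ar n) (ext_I I g) W R None Bp Bc \<and>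
           regular (\<lambda>_::unit. n) (\<lambda>_. C) UNIV classical_rel () Bp Bc"
proof -
  obtain i where Gi: "G_conditional ar I W R i" using assms(7) by blast
  have ai: "ar i = 2" using Gi unfolding G_conditional_def by blast
  obtain z where wz: "wf ar z" and ez: "\<forall>w\<in>W. eval I w z = zero"
    using assms(6) unfolding constant_expressive_def by blast
  obtain t where vt: "vars t \<subseteq> {..<n}" and ct: "\<forall>ys. length ys = n \<longrightarrow> bev t ys = C ys"
    using term_exists by blast
  obtain S where S: "\<forall>(Dp, Dc)\<in>S. designated one zero Dp \<and> designated one zero Dc"
    and RS: "R = (\<lambda>\<gamma> \<delta>. \<forall>(Dp, Dc)\<in>S. mixed Dp Dc \<gamma> \<delta>)"
    using assms(5) unfolding intersective_def by (elim exE conjE) (rule that; assumption)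
  define g where "g = teval (\<lambda>x y. I i [x, y]) zero t"
  have lrv: "\<And>P Q. (P,Q) \<in> Lr t \<Longrightarrow> P \<subseteq> {..<n} \<and> Q \<subseteq> {..<n}"
    "\<And>P Q. (P,Q) \<in> Rr t \<Longrightarrow> P \<subseteq> {..<n} \<and> Q \<subseteq> {..<n}"
    using LR_vars(1)[of _ _ t] LR_vars(2)[of _ _ t] vt by (meson order_trans)+
  have rules: "rule_of_arity n (Lr t)" "rule_of_arity n (Rr t)"
    unfolding rule_of_arity_def by (auto dest: lrv(1)) (auto dest: lrv(2))
  have BL: "\<And>\<Gamma> \<Delta>. conseq I W R (insert z \<Gamma>) \<Delta>"
  proof -
    fix \<Gamma> \<Delta>
    show "conseq I W R (insert z \<Gamma>) \<Delta>"
      unfolding conseq_def RS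
    proof (intro ballI, clarify)
      fix w Dp Dc assume w: "w \<in> W" and d: "(Dp, Dc) \<in> S"
      have "zero \<notin> Dp" using S d by (auto simp: designated_def)
      then show "mixed Dp Dc (eval I w ` insert z \<Gamma>) (eval I w ` \<Delta>)"
        unfolding mixed_def using ez w by auto
    qed
  qed
  have BR: "\<And>\<Gamma> \<Delta>. conseq I W R \<Gamma> (insert z \<Delta>) = conseq I W R \<Gamma> \<Delta>"
  proof -
    fix \<Gamma> \<Delta>
    have "\<And>w Dp Dc. w \<in> W \<Longrightarrow> (Dp, Dc) \<in> S \<Longrightarrow>
       mixed Dp Dc (eval I w ` \<Gamma>) (eval I w ` insert z \<Delta>) = mixed Dp Dc (eval I w ` \<Gamma>) (eval I w ` \<Delta>)"
    proof -
      fix w Dp Dc assume w: "w \<in> W" and d: "(Dp, Dc) \<in> S"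
      have "zero \<notin> Dc" using S d by (auto simp: designated_def)
      then show "?thesis w Dp Dc" unfolding mixed_def using ez w by auto
    qed
    then show "conseq I W R \<Gamma> (insert z \<Delta>) = conseq I W R \<Gamma> \<Delta>"
      unfolding conseq_def RS by (auto 0 0 intro!: ball_cong split: prod.splits) 
  qed
  have GR: "\<And>\<Gamma> \<Delta> A B. \<forall>F\<in>\<Gamma> \<union> \<Delta>. wf ar F \<Longrightarrow> wf ar A \<Longrightarrow> wf ar B \<Longrightarrow>
        conseq I W R \<Gamma> (insert (Op i [A, B]) \<Delta>) = conseq I W R (insert A \<Gamma>) (insert B \<Delta>)"
    using Gi unfolding G_conditional_def by blast
  have GL: "\<And>\<Gamma> \<Delta> A B. \<forall>F\<in>\<Gamma> \<union> \<Delta>. wf ar F \<Longrightarrow> wf ar A \<Longrightarrow> wf ar B \<Longrightarrow>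
        conseq I W R (insert (Op i [A, B]) \<Gamma>) \<Delta> = (conseq I W R \<Gamma> (insert A \<Delta>) \<and> conseq I W R (insert B \<Gamma>) \<Delta>)"
    using Gi unfolding G_conditional_def by blast
  have wi: "\<And>A B. wf ar A \<Longrightarrow> wf ar B \<Longrightarrow> wf ar (Op i [A, B])" using ai by simp
  have absM: "\<And>\<Gamma> \<Delta> Fs. \<forall>F\<in>\<Gamma> \<union> \<Delta>. wf ar F \<Longrightarrow> \<forall>F\<in>set Fs. wf ar F \<Longrightarrow> length Fs = n \<Longrightarrow>
   (conseq I W R (insert (teval (\<lambda>A B. Op i [A, B]) z t Fs) \<Gamma>) \<Delta> = (\<forall>(P,Q)\<in>Lr t. conseq I W R (\<Gamma> \<union> (\<lambda>j. Fs!j)`P) ((\<lambda>j. Fs!j)`Q \<union> \<Delta>))) \<and>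
   (conseq I W R \<Gamma> (insert (teval (\<lambda>A B. Op i [A, B]) z t Fs) \<Delta>) = (\<forall>(P,Q)\<in>Rr t. conseq I W R (\<Gamma> \<union> (\<lambda>j. Fs!j)`P) ((\<lambda>j. Fs!j)`Q \<union> \<Delta>)))"
  proof -
    fix \<Gamma> \<Delta> Fs assume a: "\<forall>F\<in>\<Gamma> \<union> \<Delta>. wf ar F" "\<forall>F\<in>set Fs. wf ar F" "length Fs = n"
    have v: "vars t \<subseteq> {..<length Fs}" using a(3) vt by simp
    show "?thesis \<Gamma> \<Delta> Fs"
      by (rule abstract_reg[where wfq="wf ar" and im="\<lambda>A B. Op i [A, B]" and bt=z and seq="conseq I W R",
           OF wi wz GR GL BL BR a(2) v a(1)])
  qed
  have reg1: "regular (ext_ar ar n) (ext_I I g) W R None (Lr t) (Rr t)"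
    unfolding regular_def
  proof (intro allI impI)
    fix \<Gamma> \<Delta> Fs
    assume wG: "\<forall>F\<in>\<Gamma> \<union> \<Delta>. wf (ext_ar ar n) F" and l: "length Fs = ext_ar ar n None"
      and wF: "\<forall>F\<in>set Fs. wf (ext_ar ar n) F"
    let ?tr = "tr t i z"
    let ?Ft = "map ?tr Fs"
    have l': "length Fs = n" using l by simp
    have trw: "\<And>X. wf (ext_ar ar n) X \<Longrightarrow> wf ar (?tr X)"
      using tr_props[OF ai wz ez vt] by blast
    have wFt: "\<forall>F\<in>set ?Ft. wf ar F" using wF trw by auto
    have wGt: "\<forall>F\<in>?tr`\<Gamma> \<union> ?tr`\<Delta>. wf ar F" using wG trw by auto
    have cP: "\<And>P Q. P \<subseteq> {..<n} \<Longrightarrow> Q \<subseteq> {..<n} \<Longrightarrow>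
       conseq (ext_I I g) W R (\<Gamma> \<union> (\<lambda>i. Fs!i)`P) ((\<lambda>i. Fs!i)`Q \<union> \<Delta>) =
       conseq I W R (?tr`\<Gamma> \<union> (\<lambda>i. ?Ft!i)`P) ((\<lambda>i. ?Ft!i)`Q \<union> ?tr`\<Delta>)"
    proof -
      fix P Q assume P: "P \<subseteq> {..<n}" and Q: "Q \<subseteq> {..<n}"
      have w: "\<forall>F\<in>(\<Gamma> \<union> (\<lambda>i. Fs!i)`P) \<union> ((\<lambda>i. Fs!i)`Q \<union> \<Delta>). wf (ext_ar ar n) F"
        using wG wF P Q l' by auto
      show "?thesis P Q"
        unfolding g_def conseq_tr[OF ai wz ez vt w] image_Un
        using img_nth[of P Fs ?tr] img_nth[of Q Fs ?tr] P Q l' by simp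
    qed
    have wO: "wf (ext_ar ar n) (Op None Fs)" using l' wF by simp
    have e1: "conseq (ext_I I g) W R (insert (Op None Fs) \<Gamma>) \<Delta> =
        conseq I W R (insert (teval (\<lambda>A B. Op i [A, B]) z t ?Ft) (?tr`\<Gamma>)) (?tr`\<Delta>)"
      unfolding g_def using conseq_tr[OF ai wz ez vt, of "insert (Op None Fs) \<Gamma>" \<Delta>] wG wO by simp
    have e2: "conseq (ext_I I g) W R \<Gamma> (insert (Op None Fs) \<Delta>) =
        conseq I W R (?tr`\<Gamma>) (insert (teval (\<lambda>A B. Op i [A, B]) z t ?Ft) (?tr`\<Delta>))"
      unfolding g_def using conseq_tr[OF ai wz ez vt, of \<Gamma> "insert (Op None Fs) \<Delta>"] wG wO by simp
    have A: "?Ft = map ?tr Fs" by simp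
    have lF: "length ?Ft = n" using l' by simp
    note M = absM[OF wGt wFt lF]
    have B1: "(\<forall>(P, Q)\<in>Lr t. conseq (ext_I I g) W R (\<Gamma> \<union> (\<lambda>i. Fs ! i) ` P) ((\<lambda>i. Fs ! i) ` Q \<union> \<Delta>))
       = (\<forall>(P,Q)\<in>Lr t. conseq I W R (?tr`\<Gamma> \<union> (\<lambda>i. ?Ft!i)`P) ((\<lambda>i. ?Ft!i)`Q \<union> ?tr`\<Delta>))"
      by (rule ball_pair_cong, rule cP) (use lrv in blast)+
    have B2: "(\<forall>(P, Q)\<in>Rr t. conseq (ext_I I g) W R (\<Gamma> \<union> (\<lambda>i. Fs ! i) ` P) ((\<lambda>i. Fs ! i) ` Q \<union> \<Delta>))
       = (\<forall>(P,Q)\<in>Rr t. conseq I W R (?tr`\<Gamma> \<union> (\<lambda>i. ?Ft!i)`P) ((\<lambda>i. ?Ft!i)`Q \<union> ?tr`\<Delta>))"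
      by (rule ball_pair_cong, rule cP) (use lrv in blast)+
    show "(conseq (ext_I I g) W R (insert (Op None Fs) \<Gamma>) \<Delta> =
          (\<forall>(P, Q)\<in>Lr t. conseq (ext_I I g) W R (\<Gamma> \<union> (\<lambda>i. Fs ! i) ` P) ((\<lambda>i. Fs ! i) ` Q \<union> \<Delta>))) \<and>
         (conseq (ext_I I g) W R \<Gamma> (insert (Op None Fs) \<Delta>) =
          (\<forall>(P, Q)\<in>Rr t. conseq (ext_I I g) W R (\<Gamma> \<union> (\<lambda>i. Fs ! i) ` P) ((\<lambda>i. Fs ! i) ` Q \<union> \<Delta>)))"
      unfolding B1 B2 e1 e2 by (rule M)
  qed
  define sem :: "unit form \<Rightarrow> (nat \<Rightarrow> bool) \<Rightarrow> bool" where "sem X = (\<lambda>w. eval (\<lambda>_. C) w X)" for X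
  define sseq :: "((nat \<Rightarrow> bool) \<Rightarrow> bool) set \<Rightarrow> ((nat \<Rightarrow> bool) \<Rightarrow> bool) set \<Rightarrow> bool"
    where "sseq \<Gamma> \<Delta> = (\<forall>w. (\<forall>\<phi>\<in>\<Gamma>. \<phi> w) \<longrightarrow> (\<exists>\<psi>\<in>\<Delta>. \<psi> w))" for \<Gamma> \<Delta>
  have cl: "\<And>\<Gamma> \<Delta>. conseq (\<lambda>_. C) UNIV classical_rel \<Gamma> \<Delta> = sseq (sem`\<Gamma>) (sem`\<Delta>)"
  proof -
    have cl1: "\<And>\<gamma> \<delta>. classical_rel \<gamma> \<delta> = ((\<forall>x\<in>\<gamma>. x) \<longrightarrow> (\<exists>x\<in>\<delta>. x))"
      unfolding classical_rel_def mixed_def by auto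
    fix \<Gamma> \<Delta>
    show "conseq (\<lambda>_. C) UNIV classical_rel \<Gamma> \<Delta> = sseq (sem`\<Gamma>) (sem`\<Delta>)"
      unfolding conseq_def cl1 sseq_def sem_def by simp
  qed
  have absC: "\<And>\<Gamma> \<Delta> Fs. length Fs = n \<Longrightarrow>
   (sseq (insert (teval (\<lambda>a b w. a w \<longrightarrow> b w) (\<lambda>w. False) t Fs) \<Gamma>) \<Delta> = (\<forall>(P,Q)\<in>Lr t. sseq (\<Gamma> \<union> (\<lambda>i. Fs!i)`P) ((\<lambda>i. Fs!i)`Q \<union> \<Delta>))) \<and>
   (sseq \<Gamma> (insert (teval (\<lambda>a b w. a w \<longrightarrow> b w) (\<lambda>w. False) t Fs) \<Delta>) = (\<forall>(P,Q)\<in>Rr t. sseq (\<Gamma> \<union> (\<lambda>i. Fs!i)`P) ((\<lambda>i. Fs!i)`Q \<union> \<Delta>)))"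
  proof -
    fix \<Gamma> \<Delta> Fs assume a: "length (Fs :: ((nat \<Rightarrow> bool) \<Rightarrow> bool) list) = n"
    show "?thesis \<Gamma> \<Delta> Fs"
    proof (rule abstract_reg[where wfq="\<lambda>_. True" and im="\<lambda>a b w. a w \<longrightarrow> b w" and bt="\<lambda>w. False" and seq=sseq])
      show "vars t \<subseteq> {..<length Fs}" using a vt by simp
      show "\<And>\<Gamma> \<Delta> A B. sseq \<Gamma> (insert (\<lambda>w. A w \<longrightarrow> B w) \<Delta>) = sseq (insert A \<Gamma>) (insert B \<Delta>)"
        unfolding sseq_def by auto
      show "\<And>\<Gamma> \<Delta> A B. sseq (insert (\<lambda>w. A w \<longrightarrow> B w) \<Gamma>) \<Delta> = (sseq \<Gamma> (insert A \<Delta>) \<and> sseq (insert B \<Gamma>) \<Delta>)"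
        unfolding sseq_def by auto
      show "\<And>\<Gamma> \<Delta>. sseq (insert (\<lambda>w. False) \<Gamma>) \<Delta>"
        unfolding sseq_def by auto
      show "\<And>\<Gamma> \<Delta>. sseq \<Gamma> (insert (\<lambda>w. False) \<Delta>) = sseq \<Gamma> \<Delta>"
        unfolding sseq_def by auto
    qed simp_all
  qed
  have reg2: "regular (\<lambda>_::unit. n) (\<lambda>_. C) UNIV classical_rel () (Lr t) (Rr t)"
    unfolding regular_def
  proof (intro allI impI)
    fix \<Gamma> \<Delta> and Fs :: "unit form list"
    assume l: "length Fs = n"
    have so: "sem (Op () Fs) = teval (\<lambda>a b w. a w \<longrightarrow> b w) (\<lambda>w. False) t (map sem Fs)"
    proof
      fix w
      have "teval (\<lambda>a b w. a w \<longrightarrow> b w) (\<lambda>w. False) t (map sem Fs) w = bev t (map (\<lambda>\<phi>. \<phi> w) (map sem Fs))"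
        using teval_sem[of t "map sem Fs" w] vt l by simp
      also have "\<dots> = C (map (\<lambda>\<phi>. \<phi> w) (map sem Fs))" using ct l by simp
      finally show "sem (Op () Fs) w = teval (\<lambda>a b w. a w \<longrightarrow> b w) (\<lambda>w. False) t (map sem Fs) w"
        by (simp add: sem_def o_def)
    qed
    have cP: "\<And>P Q. P \<subseteq> {..<n} \<Longrightarrow> Q \<subseteq> {..<n} \<Longrightarrow>
       conseq (\<lambda>_. C) UNIV classical_rel (\<Gamma> \<union> (\<lambda>i. Fs!i)`P) ((\<lambda>i. Fs!i)`Q \<union> \<Delta>) =
       sseq (sem`\<Gamma> \<union> (\<lambda>i. map sem Fs!i)`P) ((\<lambda>i. map sem Fs!i)`Q \<union> sem`\<Delta>)"
      unfolding cl image_Un using img_nth[of _ Fs sem] l by simp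
    have lF: "length (map sem Fs) = n" using l by simp
    note M = absC[OF lF]
    have B1: "(\<forall>(P, Q)\<in>Lr t. conseq (\<lambda>_. C) UNIV classical_rel (\<Gamma> \<union> (\<lambda>i. Fs ! i) ` P) ((\<lambda>i. Fs ! i) ` Q \<union> \<Delta>))
       = (\<forall>(P,Q)\<in>Lr t. sseq (sem`\<Gamma> \<union> (\<lambda>i. map sem Fs!i)`P) ((\<lambda>i. map sem Fs!i)`Q \<union> sem`\<Delta>))"
      by (rule ball_pair_cong, rule cP) (use lrv in blast)+
    have B2: "(\<forall>(P, Q)\<in>Rr t. conseq (\<lambda>_. C) UNIV classical_rel (\<Gamma> \<union> (\<lambda>i. Fs ! i) ` P) ((\<lambda>i. Fs ! i) ` Q \<union> \<Delta>))
       = (\<forall>(P,Q)\<in>Rr t. sseq (sem`\<Gamma> \<union> (\<lambda>i. map sem Fs!i)`P) ((\<lambda>i. map sem Fs!i)`Q \<union> sem`\<Delta>))"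
      by (rule ball_pair_cong, rule cP) (use lrv in blast)+
    show "(conseq (\<lambda>_. C) UNIV classical_rel (insert (Op () Fs) \<Gamma>) \<Delta> =
          (\<forall>(P, Q)\<in>Lr t. conseq (\<lambda>_. C) UNIV classical_rel (\<Gamma> \<union> (\<lambda>i. Fs ! i) ` P) ((\<lambda>i. Fs ! i) ` Q \<union> \<Delta>))) \<and>
         (conseq (\<lambda>_. C) UNIV classical_rel \<Gamma> (insert (Op () Fs) \<Delta>) =
          (\<forall>(P, Q)\<in>Rr t. conseq (\<lambda>_. C) UNIV classical_rel (\<Gamma> \<union> (\<lambda>i. Fs ! i) ` P) ((\<lambda>i. Fs ! i) ` Q \<union> \<Delta>)))"
      unfolding B1 B2 unfolding cl image_insert so by (rule M)
  qed
  show ?thesis using rules reg1 reg2 by blast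
qed


end
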